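(* Let $\Gamma$ be a graph on vertex set $[n]$, let $r\in\mathbb{N}$, and suppose $\Gamma$ contains a spanning subgraph $A$ which is an $r$-flower (with respect to the host graph $\Gamma$), with sets $V^1,\dots,V^{r+1}$ as in the definition. Then $A$ is $C_4$-saturated in $\Gamma$ and $$ |E(A)|=|E(A[V^{r+1}])|+\frac{3}{2}\left(n-|V^{r+1}|-r\right)+3\left(|V^2|+\ldots+|V^{r+1}|\right). $$
   Context: For a graph $A$ and $V\subseteq V(A)$, $A[V]$ is the induced subgraph and $N_{A}(v)$ the neighbourhood of $v$. A spanning subgraph $A$ of $\Gamma$ is $C_4$-saturated in $\Gamma$ if $A$ contains no copy of the $4$-cycle $C_4$ but adding to $A$ any edge of $\Gamma$ not in $A$ creates a copy of $C_4$. Let $A\subseteq\Gamma$ be a graph on $[n]$ and $r\in\mathbb{N}$. $A$ is an $r$-flower if there exist sets $V^{1},\dots,V^{r+1}$ and, for each $i\in[r]$, sets $R_i,V^i_1,V^i_2,V^i_3$ such that: (1) $V^1=[n]$ and for every $\ell\in[r]$, $V^\ell$ is the disjoint union of $V^{r+1}$ and the sets $V^i_1,V^i_2,V^i_3,R_i$ for $i=\ell,\dots,r$; (2) for every $i\in[r]$, $R_i=\{v^i_1,v^i_2,v^i_3\}$ consists of three pairwise adjacent (in $A$) vertices; (3) for every $i\in[r]$, $j\in\{1,2,3\}$, $N_{A[V^i]}(v^i_j)\setminus R_i=V^i_j$; (4) for every $i\in[r]$, $j\in\{1,2,3\}$ there is a partition $V^i_j=W^i_j\sqcup U^i_j\sqcup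 Y^i_j$ such that (4.1) the edges of $A[W^i_j\sqcup V^{i+1}]$ not in $A[V^{i+1}]$ form a perfect matching between $W^i_j$ and $V^{i+1}$, (4.2) the edges of $A[W^i_j\sqcup U^i_j]$ form a perfect matching between $W^i_j$ and $U^i_j$, (4.3) the edges of $A[Y^i_j]$ form a perfect matching of $Y^i_j$; (5) $A[V^{r+1}]$ is an inclusion-maximal $C_4$-free graph, i.e. $C_4$-saturated in $\Gamma[V^{r+1}]$; (6) $A$ has no edges other than those described in (2)–(5). *)

theory Defs
  imports Complex_Main
begin

definition graph_on :: "nat \<Rightarrow> nat set set \<Rightarrow> bool" where
  "graph_on n G \<longleftrightarrow> (\<forall>e\<in>G. \<exists>u w. u \<noteq> w \<and> e = {u, w} \<and> u \<in> {1..n} \<and> w \<in> {1..n})"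

definition induced :: "nat set set \<Rightarrow> nat set \<Rightarrow> nat set set" where
  "induced A V = {e \<in> A. e \<subseteq> V}"

definition nbhd :: "nat set set \<Rightarrow> nat set \<Rightarrow> nat \<Rightarrow> nat set" where
  "nbhd A V v = {u \<in> V. {u, v} \<in> induced A V}"

definition C4_free :: "nat set set \<Rightarrow> bool" where
  "C4_free A \<longleftrightarrow> \<not> (\<exists>a b c d. distinct [a, b, c, d] \<and>
      {a, b} \<in> A \<and> {b, c} \<in> A \<and> {c, d} \<in> A \<and> {d, a} \<in> A)"

definition C4_saturated :: "nat set set \<Rightarrow> nat set set \<Rightarrow> bool" where
  "C4_saturated G A \<longleftrightarrow> A \<subseteq> G \<and> C4_free A \<and> (\<forall>e \<in> G - A. \<not> C4_free (insert e A))"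

definition perfect_matching_between :: "nat set set \<Rightarrow> nat set \<Rightarrow> nat set \<Rightarrow> bool" where
  "perfect_matching_between M X Z \<longleftrightarrow>
     (\<forall>e\<in>M. \<exists>x\<in>X. \<exists>z\<in>Z. e = {x, z}) \<and> (\<forall>x \<in> X \<union> Z. \<exists>!e. e \<in> M \<and> x \<in> e)"

definition perfect_matching_of :: "nat set set \<Rightarrow> nat set \<Rightarrow> bool" where
  "perfect_matching_of M Y \<longleftrightarrow>
     (\<forall>e\<in>M. \<exists>x\<in>Y. \<exists>z\<in>Y. x \<noteq> z \<and> e = {x, z}) \<and> (\<forall>x \<in> Y. \<exists>!e. e \<in> M \<and> x \<in> e)"

text \<open>Pieces of the decomposition: piece R Vs (i,0) = R_i, piece R Vs (i,j) = V^i_j.\<close>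
definition piece :: "(nat \<Rightarrow> nat set) \<Rightarrow> (nat \<Rightarrow> nat \<Rightarrow> nat set) \<Rightarrow> nat \<times> nat \<Rightarrow> nat set" where
  "piece R Vs p = (if snd p = 0 then R (fst p) else Vs (fst p) (snd p))"

text \<open>The r-flower structure, with witnesses: V i = V^i (i = 1..r+1), R i = R_i,
  v i j = v^i_j, Vs i j = V^i_j, W i j, U i j, Y i j (j = 1,2,3).\<close>
definition is_flower ::
  "nat \<Rightarrow> nat set set \<Rightarrow> nat set set \<Rightarrow> nat \<Rightarrow> (nat \<Rightarrow> nat set) \<Rightarrow> (nat \<Rightarrow> nat set)
   \<Rightarrow> (nat \<Rightarrow> nat \<Rightarrow> nat) \<Rightarrow> (nat \<Rightarrow> nat \<Rightarrow> nat set) \<Rightarrow> (nat \<Rightarrow> nat \<Rightarrow> nat set)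
   \<Rightarrow> (nat \<Rightarrow> nat \<Rightarrow> nat set) \<Rightarrow> (nat \<Rightarrow> nat \<Rightarrow> nat set) \<Rightarrow> bool" where
  "is_flower n G A r V R v Vs W U Y \<longleftrightarrow>
    \<comment> \<open>(1)\<close>
    V 1 = {1..n} \<and>
    (\<forall>l\<in>{1..r}.
       V l = V (r+1) \<union> (\<Union>p \<in> {l..r} \<times> {0..3}. piece R Vs p) \<and>
       (\<forall>p \<in> {l..r} \<times> {0..3}. piece R Vs p \<inter> V (r+1) = {}) \<and>
       (\<forall>p \<in> {l..r} \<times> {0..3}. \<forall>q \<in> {l..r} \<times> {0..3}. p \<noteq> q \<longrightarrow> piece R Vs p \<inter> piece R Vs q = {})) \<and>
    \<comment> \<open>(2)\<close>
    (\<forall>i\<in>{1..r}. R i = {v i 1, v i 2, v i 3} \<and>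
       {v i 1, v i 2} \<in> A \<and> {v i 2, v i 3} \<in> A \<and> {v i 1, v i 3} \<in> A) \<and>
    \<comment> \<open>(3)\<close>
    (\<forall>i\<in>{1..r}. \<forall>j\<in>{1,2,3}. nbhd A (V i) (v i j) - R i = Vs i j) \<and>
    \<comment> \<open>(4)\<close>
    (\<forall>i\<in>{1..r}. \<forall>j\<in>{1,2,3}.
       Vs i j = W i j \<union> U i j \<union> Y i j \<and>
       W i j \<inter> U i j = {} \<and> W i j \<inter> Y i j = {} \<and> U i j \<inter> Y i j = {} \<and>
       perfect_matching_between (induced A (W i j \<union> V (i+1)) - induced A (V (i+1))) (W i j) (V (i+1)) \<and>
       perfect_matching_between (induced A (W i j \<union> U i j)) (W i j) (U i j) \<and>
       perfect_matching_of (induced A (Y i j)) (Y i j)) \<and>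
    \<comment> \<open>(5)\<close>
    C4_saturated (induced G (V (r+1))) (induced A (V (r+1))) \<and>
    \<comment> \<open>(6)\<close>
    (\<forall>e\<in>A. e \<subseteq> V (r+1) \<or>
       (\<exists>i\<in>{1..r}. e \<subseteq> R i \<or>
          (\<exists>j\<in>{1,2,3}. (\<exists>x \<in> Vs i j. e = {v i j, x}) \<or>
             (e \<subseteq> W i j \<union> V (i+1) \<and> \<not> e \<subseteq> V (i+1)) \<or>
             e \<subseteq> W i j \<union> U i j \<or> e \<subseteq> Y i j)))"

end

theory Submission
  imports Defs
begin

locale flw =
  fixes n :: nat and G A :: "nat set set"
    and V R :: "nat \<Rightarrow> nat set" and v :: "nat \<Rightarrow> nat \<Rightarrow> nat"
    and Vs W U Y :: "nat \<Rightarrow> nat \<Rightarrow> nat set" and r :: nat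
  assumes gr: "graph_on n G" and AG: "A \<subseteq> G"
    and fl: "is_flower n G A r V R v Vs W U Y"
begin

lemmas F = fl[unfolded is_flower_def]

lemma V1: "V 1 = {1..n}" using F by (rule conjunct1)

lemma c1: "l \<in> {1..r} \<Longrightarrow>
       V l = V (r+1) \<union> (\<Union>p \<in> {l..r} \<times> {0..3}. piece R Vs p) \<and>
       (\<forall>p \<in> {l..r} \<times> {0..3}. piece R Vs p \<inter> V (r+1) = {}) \<and>
       (\<forall>p \<in> {l..r} \<times> {0..3}. \<forall>q \<in> {l..r} \<times> {0..3}. p \<noteq> q \<longrightarrow> piece R Vs p \<inter> piece R Vs q = {})"
  by (rule bspec[OF F[THEN conjunct2, THEN conjunct1]])

lemma c2: "i \<in> {1..r} \<Longrightarrow> R i = {v i 1, v i 2, v i 3} \<and>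
       {v i 1, v i 2} \<in> A \<and> {v i 2, v i 3} \<in> A \<and> {v i 1, v i 3} \<in> A"
  by (rule bspec[OF F[THEN conjunct2, THEN conjunct2, THEN conjunct1]])

lemma c3: "i \<in> {1..r} \<Longrightarrow> j \<in> {1,2,3} \<Longrightarrow> nbhd A (V i) (v i j) - R i = Vs i j"
  by (rule bspec[OF bspec[OF F[THEN conjunct2, THEN conjunct2, THEN conjunct2, THEN conjunct1]]])

lemma c4: "i \<in> {1..r} \<Longrightarrow> j \<in> {1,2,3} \<Longrightarrow>
       Vs i j = W i j \<union> U i j \<union> Y i j \<and>
       W i j \<inter> U i j = {} \<and> W i j \<inter> Y i j = {} \<and> U i j \<inter> Y i j = {} \<and>
       perfect_matching_between (induced A (W i j \<union> V (i+1)) - induced A (V (i+1))) (W i j) (V (i+1)) \<and>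
       perfect_matching_between (induced A (W i j \<union> U i j)) (W i j) (U i j) \<and>
       perfect_matching_of (induced A (Y i j)) (Y i j)"
  by (rule bspec[OF bspec[OF F[THEN conjunct2, THEN conjunct2, THEN conjunct2, THEN conjunct2, THEN conjunct1]]])

lemma c5: "C4_saturated (induced G (V (r+1))) (induced A (V (r+1)))"
  using F[THEN conjunct2, THEN conjunct2, THEN conjunct2, THEN conjunct2, THEN conjunct2, THEN conjunct1] .

lemma c6: "e \<in> A \<Longrightarrow> e \<subseteq> V (r+1) \<or>
       (\<exists>i\<in>{1..r}. e \<subseteq> R i \<or>
          (\<exists>j\<in>{1,2,3}. (\<exists>x \<in> Vs i j. e = {v i j, x}) \<or>
             (e \<subseteq> W i j \<union> V (i+1) \<and> \<not> e \<subseteq> V (i+1)) \<or>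
             e \<subseteq> W i j \<union> U i j \<or> e \<subseteq> Y i j))"
  by (rule bspec[OF F[THEN conjunct2, THEN conjunct2, THEN conjunct2, THEN conjunct2, THEN conjunct2, THEN conjunct2]])

lemma edgeA: "e \<in> A \<Longrightarrow> \<exists>u w. u \<noteq> w \<and> e = {u, w} \<and> u \<in> {1..n} \<and> w \<in> {1..n}"
  using gr AG unfolding graph_on_def by blast

lemma edge_ne: "{x, y} \<in> A \<Longrightarrow> x \<noteq> y"
  using edgeA by (metis doubleton_eq_iff insert_absorb2)

lemma edge_nonempty: "e \<in> A \<Longrightarrow> e \<noteq> {}"
  using edgeA by blast

lemma finA: "finite A"
proof -
  have "A \<subseteq> Pow {1..n}" using edgeA by blast
  thus ?thesis by (meson finite_Pow_iff finite_atLeastAtMost finite_subset)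
qed

lemma S1: "l \<in> {1..r+1} \<Longrightarrow> V l = V (r+1) \<union> (\<Union>p \<in> {l..r} \<times> {0..3}. piece R Vs p)"
proof -
  assume l: "l \<in> {1..r+1}"
  show ?thesis
  proof (cases "l = r+1")
    case True then show ?thesis by simp
  next
    case False then show ?thesis using c1[of l] l by auto
  qed
qed

lemma piece_i: "piece R Vs (i,0) = R i" "k \<noteq> 0 \<Longrightarrow> piece R Vs (i,k) = Vs i k"
  by (auto simp: piece_def)

lemma S2: assumes "i \<in> {1..r}"
  shows "V i = V (i+1) \<union> R i \<union> Vs i 1 \<union> Vs i 2 \<union> Vs i 3"
proof -
  have a: "V i = V (r+1) \<union> (\<Union>p \<in> {i..r} \<times> {0..3}. piece R Vs p)" using S1[of i] assms by auto
  have b: "V (i+1) = V (r+1) \<union> (\<Union>p \<in> {i+1..r} \<times> {0..3}. piece R Vs p)" using S1[of "i+1"] assms by auto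
  have c: "{i..r} \<times> {0..3::nat} = {i} \<times> {0,1,2,3} \<union> {i+1..r} \<times> {0..3}" using assms by auto
  have d: "(\<Union>p \<in> {i} \<times> {0,1,2,3}. piece R Vs p) = R i \<union> Vs i 1 \<union> Vs i 2 \<union> Vs i 3"
    by (simp add: piece_def Un_ac)
  have e: "(\<Union>p \<in> {i..r} \<times> {0..3}. piece R Vs p) = (\<Union>p \<in> {i} \<times> {0,1,2,3}. piece R Vs p) \<union> (\<Union>p \<in> {i+1..r} \<times> {0..3}. piece R Vs p)"
    unfolding c by (rule UN_Un)
  show ?thesis using a b d e by (simp only:) blast
qed

lemma S3: assumes "i \<in> {1..r}" "k \<in> {0..3}" "k' \<in> {0..3}" "k \<noteq> k'"
  shows "piece R Vs (i,k) \<inter> V (i+1) = {}" "piece R Vs (i,k) \<inter> piece R Vs (i,k') = {}"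
proof -
  have b: "V (i+1) = V (r+1) \<union> (\<Union>p \<in> {i+1..r} \<times> {0..3}. piece R Vs p)" using S1[of "i+1"] assms by auto
  note cc = c1[OF assms(1)]
  have p: "(i,k) \<in> {i..r} \<times> {0..3}" "(i,k') \<in> {i..r} \<times> {0..3}" using assms by auto
  have x1: "piece R Vs (i,k) \<inter> V (r+1) = {}" using cc p by blast
  have x2: "\<forall>q \<in> {i+1..r} \<times> {0..3}. piece R Vs (i,k) \<inter> piece R Vs q = {}"
  proof
    fix q assume q: "q \<in> {i+1..r} \<times> {0..(3::nat)}"
    hence "q \<in> {i..r} \<times> {0..3}" "q \<noteq> (i,k)" by auto
    thus "piece R Vs (i,k) \<inter> piece R Vs q = {}" using cc p by blast
  qed
  show "piece R Vs (i,k) \<inter> V (i+1) = {}" unfolding b using x1 x2 by blast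
  show "piece R Vs (i,k) \<inter> piece R Vs (i,k') = {}"
    using cc p assms(4) by blast
qed

lemma S4: assumes "1 \<le> l" "l \<le> k" "k \<le> r+1" shows "V k \<subseteq> V l"
proof -
  have "{k..r} \<times> {0..3::nat} \<subseteq> {l..r} \<times> {0..3}" using assms by auto
  hence "(\<Union>p \<in> {k..r} \<times> {0..3}. piece R Vs p) \<subseteq> (\<Union>p \<in> {l..r} \<times> {0..3}. piece R Vs p)" by (rule UN_mono) simp
  thus ?thesis using S1[of l] S1[of k] assms by auto
qed

lemma Vn: "l \<in> {1..r+1} \<Longrightarrow> V l \<subseteq> {1..n}"
  using S4[of 1 l] V1 by auto

lemma finV: "l \<in> {1..r+1} \<Longrightarrow> finite (V l)"
  using Vn finite_subset by blast


abbreviation "M1 i j \<equiv> induced A (W i j \<union> V (i+1)) - induced A (V (i+1))"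
abbreviation "M2 i j \<equiv> induced A (W i j \<union> U i j)"
abbreviation "M3 i j \<equiv> induced A (Y i j)"
abbreviation "S i j \<equiv> (\<lambda>x. {v i j, x}) ` Vs i j"
abbreviation "P i \<equiv> R i \<union> Vs i 1 \<union> Vs i 2 \<union> Vs i 3"

lemma c4a: "i \<in> {1..r} \<Longrightarrow> j \<in> {1,2,3} \<Longrightarrow> Vs i j = W i j \<union> U i j \<union> Y i j \<and>
       W i j \<inter> U i j = {} \<and> W i j \<inter> Y i j = {} \<and> U i j \<inter> Y i j = {}"
  using c4 by blast
lemma pmb1: "i \<in> {1..r} \<Longrightarrow> j \<in> {1,2,3} \<Longrightarrow> perfect_matching_between (M1 i j) (W i j) (V (i+1))"
  using c4 by blast
lemma pmb2: "i \<in> {1..r} \<Longrightarrow> j \<in> {1,2,3} \<Longrightarrow> perfect_matching_between (M2 i j) (W i j) (U i j)"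
  using c4 by blast
lemma pmo3: "i \<in> {1..r} \<Longrightarrow> j \<in> {1,2,3} \<Longrightarrow> perfect_matching_of (M3 i j) (Y i j)"
  using c4 by blast

lemma vR: "i \<in> {1..r} \<Longrightarrow> j \<in> {1,2,3} \<Longrightarrow> v i j \<in> R i" using c2 by auto

lemma Rv: "i \<in> {1..r} \<Longrightarrow> x \<in> R i \<Longrightarrow> \<exists>j\<in>{1,2,3}. x = v i j" using c2 by auto

lemma vdist: "i \<in> {1..r} \<Longrightarrow> v i 1 \<noteq> v i 2 \<and> v i 2 \<noteq> v i 3 \<and> v i 1 \<noteq> v i 3"
  using c2 edge_ne by blast

lemma vinj: "i \<in> {1..r} \<Longrightarrow> j \<in> {1,2,3} \<Longrightarrow> k \<in> {1,2,3} \<Longrightarrow> v i j = v i k \<Longrightarrow> j = k"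
  using vdist[of i] by auto

lemma D1: assumes "i \<in> {1..r}" "j \<in> {1,2,3}"
  shows "R i \<inter> V (i+1) = {}" "Vs i j \<inter> V (i+1) = {}" "R i \<inter> Vs i j = {}"
proof -
  show "R i \<inter> V (i+1) = {}" using S3(1)[of i 0 1] assms by (simp add: piece_def)
  show "Vs i j \<inter> V (i+1) = {}" using S3(1)[of i j 0] assms by (auto simp: piece_def)
  show "R i \<inter> Vs i j = {}" using S3(2)[of i 0 j] assms by (auto simp: piece_def)
qed

lemma D3: assumes "i \<in> {1..r}" "j \<in> {1,2,3}" "k \<in> {1,2,3}" "j \<noteq> k"
  shows "Vs i j \<inter> Vs i k = {}"
  using S3(2)[of i j k] assms by (auto simp: piece_def)

lemma subV: assumes "i \<in> {1..r}" "j \<in> {1,2,3}"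
  shows "R i \<subseteq> V i" "Vs i j \<subseteq> V i" "V (i+1) \<subseteq> V i" "W i j \<subseteq> Vs i j" "U i j \<subseteq> Vs i j" "Y i j \<subseteq> Vs i j"
  using S2[OF assms(1)] c4a[OF assms] assms by auto

lemma PV: "i \<in> {1..r} \<Longrightarrow> P i \<inter> V (i+1) = {}" using D1[of i] by auto

lemma pm1: "i \<in> {1..r} \<Longrightarrow> j \<in> {1,2,3} \<Longrightarrow> e \<in> M1 i j \<Longrightarrow> \<exists>x\<in>W i j. \<exists>z\<in>V (i+1). e = {x, z}"
  using pmb1 unfolding perfect_matching_between_def by blast
lemma pm2: "i \<in> {1..r} \<Longrightarrow> j \<in> {1,2,3} \<Longrightarrow> e \<in> M2 i j \<Longrightarrow> \<exists>x\<in>W i j. \<exists>z\<in>U i j. e = {x, z}"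
  using pmb2 unfolding perfect_matching_between_def by blast
lemma pm3: "i \<in> {1..r} \<Longrightarrow> j \<in> {1,2,3} \<Longrightarrow> e \<in> M3 i j \<Longrightarrow> \<exists>x\<in>Y i j. \<exists>z\<in>Y i j. x \<noteq> z \<and> e = {x, z}"
  using pmo3 unfolding perfect_matching_of_def by blast

lemma SA: assumes "i \<in> {1..r}" "j \<in> {1,2,3}" "x \<in> Vs i j" shows "{v i j, x} \<in> A"
proof -
  have "x \<in> nbhd A (V i) (v i j)" using c3[OF assms(1,2)] assms(3) by blast
  thus ?thesis unfolding nbhd_def induced_def by (auto simp: insert_commute)
qed

lemma NR: assumes "i \<in> {1..r}" "j \<in> {1,2,3}" "{v i j, z} \<in> A" "z \<in> V i" "z \<notin> R i"
  shows "z \<in> Vs i j"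
proof -
  have "v i j \<in> V i" using vR[OF assms(1,2)] subV[OF assms(1,2)] by blast
  hence "z \<in> nbhd A (V i) (v i j)" using assms unfolding nbhd_def induced_def by (auto simp: insert_commute)
  thus ?thesis using c3[OF assms(1,2)] assms(5) by blast
qed

lemma TY: assumes "i \<in> {1..r}" "e \<in> A"
  and "e \<subseteq> R i \<or>
          (\<exists>j\<in>{1,2,3}. (\<exists>x \<in> Vs i j. e = {v i j, x}) \<or>
             (e \<subseteq> W i j \<union> V (i+1) \<and> \<not> e \<subseteq> V (i+1)) \<or>
             e \<subseteq> W i j \<union> U i j \<or> e \<subseteq> Y i j)"
  shows "e \<subseteq> V i \<and> e \<inter> P i \<noteq> {}"
proof -
  have ne: "e \<noteq> {}" using edge_nonempty assms by blast
  from assms(3) show ?thesis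
  proof (elim disjE bexE conjE)
    assume "e \<subseteq> R i" thus ?thesis using ne subV[OF assms(1), of 1] by blast
  next
    fix j x assume j: "j \<in> {1,2,3}" and "x \<in> Vs i j" "e = {v i j, x}"
    thus ?thesis using subV[OF assms(1) j] vR[OF assms(1) j] by blast
  next
    fix j assume j: "j \<in> {1,2,3}" and "e \<subseteq> W i j \<union> V (i+1)" "\<not> e \<subseteq> V (i+1)"
    thus ?thesis using subV[OF assms(1) j] by blast
  next
    fix j assume j: "j \<in> {1,2,3}" and "e \<subseteq> W i j \<union> U i j"
    thus ?thesis using subV[OF assms(1) j] ne by blast
  next
    fix j assume j: "j \<in> {1,2,3}" and "e \<subseteq> Y i j"
    thus ?thesis using subV[OF assms(1) j] ne by blast
  qed
qed

lemma CL: assumes "i \<in> {1..r}" "e \<in> A" "e \<subseteq> V i" "\<not> e \<subseteq> V (i+1)"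
  shows "e \<subseteq> R i \<or> (\<exists>j\<in>{1,2,3}. e \<in> S i j \<or> e \<in> M1 i j \<or> e \<in> M2 i j \<or> e \<in> M3 i j)"
proof -
  have "V (r+1) \<subseteq> V (i+1)" using assms(1) by (intro S4) auto
  hence "\<not> e \<subseteq> V (r+1)" using assms(4) by blast
  hence "\<exists>i'\<in>{1..r}. e \<subseteq> R i' \<or>
          (\<exists>j\<in>{1,2,3}. (\<exists>x \<in> Vs i' j. e = {v i' j, x}) \<or>
             (e \<subseteq> W i' j \<union> V (i'+1) \<and> \<not> e \<subseteq> V (i'+1)) \<or>
             e \<subseteq> W i' j \<union> U i' j \<or> e \<subseteq> Y i' j)" using c6[OF assms(2)] by (elim disjE) simp_all
  then obtain i' where i': "i' \<in> {1..r}" and ty: "e \<subseteq> R i' \<or>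
          (\<exists>j\<in>{1,2,3}. (\<exists>x \<in> Vs i' j. e = {v i' j, x}) \<or>
             (e \<subseteq> W i' j \<union> V (i'+1) \<and> \<not> e \<subseteq> V (i'+1)) \<or>
             e \<subseteq> W i' j \<union> U i' j \<or> e \<subseteq> Y i' j)" by (rule bexE)
  have t: "e \<subseteq> V i' \<and> e \<inter> P i' \<noteq> {}" using TY[OF i' assms(2) ty] .
  consider "i' < i" | "i' = i" | "i' > i" by linarith
  thus ?thesis
  proof cases
    case 1
    have "V i \<subseteq> V (i'+1)" using 1 assms(1) by (intro S4) auto
    moreover have "P i' \<inter> V (i'+1) = {}" using PV[OF i'] .
    ultimately show ?thesis using t assms(3) by blast
  next
    case 3
    have "V i' \<subseteq> V (i+1)" using 3 i' by (intro S4) auto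
    thus ?thesis using t assms(4) by blast
  next
    case 2
    from ty[unfolded 2] show ?thesis
    proof (elim disjE bexE conjE)
      assume "e \<subseteq> R i" thus ?thesis by blast
    next
      fix j x assume j: "j \<in> {1,2,3}" and "x \<in> Vs i j" "e = {v i j, x}"
      hence "e \<in> S i j" by blast
      thus ?thesis using j by blast
    next
      fix j assume j: "j \<in> {1,2,3}" and "e \<subseteq> W i j \<union> V (i+1)" "\<not> e \<subseteq> V (i+1)"
      hence "e \<in> M1 i j" using assms(2) unfolding induced_def by blast
      thus ?thesis using j by blast
    next
      fix j assume j: "j \<in> {1,2,3}" and "e \<subseteq> W i j \<union> U i j"
      hence "e \<in> M2 i j" using assms(2) unfolding induced_def by blast
      thus ?thesis using j by blast
    next
      fix j assume j: "j \<in> {1,2,3}" and "e \<subseteq> Y i j"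
      hence "e \<in> M3 i j" using assms(2) unfolding induced_def by blast
      thus ?thesis using j by blast
    qed
  qed
qed

lemma E2: assumes "i \<in> {1..r}" "j \<in> {1,2,3}" "x \<in> Vs i j" "z \<in> V i" "{x, z} \<in> A"
  shows "z = v i j \<or> z \<in> Vs i j \<or> (x \<in> W i j \<and> z \<in> V (i+1))"
proof (cases "z \<in> R i")
  case True
  then obtain k where k: "k \<in> {1,2,3}" "z = v i k" using Rv assms(1) by blast
  have "x \<notin> R i" using D1[OF assms(1,2)] assms(3) by blast
  moreover have "x \<in> V i" using subV[OF assms(1,2)] assms(3) by blast
  ultimately have "x \<in> Vs i k" using NR[OF assms(1) k(1), of x] assms(5) k(2) by (simp add: insert_commute)
  hence "k = j" using D3[OF assms(1) k(1) assms(2)] assms(3) by blast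
  thus ?thesis using k by simp
next
  case False
  have xn: "x \<notin> R i" "x \<notin> V (i+1)" using D1[OF assms(1,2)] assms(3) by blast+
  have "{x,z} \<subseteq> V i" using subV[OF assms(1,2)] assms(3,4) by blast
  moreover have "\<not> {x,z} \<subseteq> V (i+1)" using xn by blast
  ultimately have cl: "{x,z} \<subseteq> R i \<or> (\<exists>k\<in>{1,2,3}. {x,z} \<in> S i k \<or> {x,z} \<in> M1 i k \<or> {x,z} \<in> M2 i k \<or> {x,z} \<in> M3 i k)"
    using CL[OF assms(1) assms(5)] by blast
  have dj: "\<And>k. k \<in> {1,2,3} \<Longrightarrow> x \<in> Vs i k \<Longrightarrow> k = j" using D3[OF assms(1) _ assms(2)] assms(3) by blast
  from cl show ?thesis
  proof (elim disjE bexE)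
    assume "{x,z} \<subseteq> R i" thus ?thesis using xn by blast
  next
    fix k assume k: "k \<in> {1,2,3}" "{x,z} \<in> S i k"
    thus ?thesis using xn False vR[OF assms(1) k(1)] by (auto simp: doubleton_eq_iff)
  next
    fix k assume k: "k \<in> {1,2,3}" "{x,z} \<in> M1 i k"
    then obtain w y where wy: "w \<in> W i k" "y \<in> V (i+1)" "{x,z} = {w,y}" using pm1[OF assms(1)] by blast
    have "x = w \<and> z = y" using wy xn by (auto simp: doubleton_eq_iff)
    moreover have "x \<in> Vs i k" using wy subV[OF assms(1) k(1)] calculation by blast
    ultimately show ?thesis using dj k wy by blast
  next
    fix k assume k: "k \<in> {1,2,3}" "{x,z} \<in> M2 i k"
    hence "{x,z} \<subseteq> Vs i k" using subV[OF assms(1) k(1)] unfolding induced_def by blast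
    thus ?thesis using dj k by blast
  next
    fix k assume k: "k \<in> {1,2,3}" "{x,z} \<in> M3 i k"
    hence "{x,z} \<subseteq> Vs i k" using subV[OF assms(1) k(1)] unfolding induced_def by blast
    thus ?thesis using dj k by blast
  qed
qed

lemma IN: assumes "i \<in> {1..r}" "j \<in> {1,2,3}" "e \<in> A" "e \<subseteq> Vs i j"
  shows "e \<in> M2 i j \<or> e \<in> M3 i j"
proof -
  have ne: "e \<noteq> {}" using edge_nonempty assms by blast
  have "e \<subseteq> V i" using subV[OF assms(1,2)] assms(4) by blast
  moreover have "\<not> e \<subseteq> V (i+1)" using D1[OF assms(1,2)] ne assms(4) by blast
  ultimately have cl: "e \<subseteq> R i \<or> (\<exists>k\<in>{1,2,3}. e \<in> S i k \<or> e \<in> M1 i k \<or> e \<in> M2 i k \<or> e \<in> M3 i k)"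
    using CL[OF assms(1) assms(3)] by blast
  have dj: "\<And>k. k \<in> {1,2,3} \<Longrightarrow> e \<subseteq> Vs i k \<Longrightarrow> k = j" using D3[OF assms(1) _ assms(2)] assms(4) ne by blast
  from cl show ?thesis
  proof (elim disjE bexE)
    assume "e \<subseteq> R i" thus ?thesis using D1[OF assms(1,2)] ne assms(4) by blast
  next
    fix k assume k: "k \<in> {1,2,3}" "e \<in> S i k"
    thus ?thesis using D1[OF assms(1,2)] vR[OF assms(1) k(1)] assms(4) by blast
  next
    fix k assume k: "k \<in> {1,2,3}" "e \<in> M1 i k"
    then obtain w y where wy: "w \<in> W i k" "y \<in> V (i+1)" "e = {w,y}" using pm1[OF assms(1)] by blast
    thus ?thesis using D1[OF assms(1,2)] assms(4) by blast
  next
    fix k assume k: "k \<in> {1,2,3}" "e \<in> M2 i k"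
    hence "e \<subseteq> Vs i k" using subV[OF assms(1) k(1)] unfolding induced_def by blast
    thus ?thesis using dj k by blast
  next
    fix k assume k: "k \<in> {1,2,3}" "e \<in> M3 i k"
    hence "e \<subseteq> Vs i k" using subV[OF assms(1) k(1)] unfolding induced_def by blast
    thus ?thesis using dj k by blast
  qed
qed

lemma uniq_b: "perfect_matching_between M X Z \<Longrightarrow> e1 \<in> M \<Longrightarrow> e2 \<in> M \<Longrightarrow> x \<in> X \<union> Z \<Longrightarrow> x \<in> e1 \<Longrightarrow> x \<in> e2 \<Longrightarrow> e1 = e2"
  unfolding perfect_matching_between_def by blast
lemma uniq_o: "perfect_matching_of M X \<Longrightarrow> e1 \<in> M \<Longrightarrow> e2 \<in> M \<Longrightarrow> x \<in> X \<Longrightarrow> x \<in> e1 \<Longrightarrow> x \<in> e2 \<Longrightarrow> e1 = e2"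
  unfolding perfect_matching_of_def by blast

lemma U1: assumes "i \<in> {1..r}" "j \<in> {1,2,3}" "x \<in> Vs i j" "z1 \<in> Vs i j" "z2 \<in> Vs i j"
  "{x,z1} \<in> A" "{x,z2} \<in> A" shows "z1 = z2"
proof -
  note cc = c4a[OF assms(1,2)] pmb1[OF assms(1,2)] pmb2[OF assms(1,2)] pmo3[OF assms(1,2)]
  have e1: "{x,z1} \<in> M2 i j \<or> {x,z1} \<in> M3 i j" using IN assms by blast
  have e2: "{x,z2} \<in> M2 i j \<or> {x,z2} \<in> M3 i j" using IN assms by blast
  show ?thesis
  proof (cases "x \<in> Y i j")
    case True
    hence "{x,z1} \<notin> M2 i j" "{x,z2} \<notin> M2 i j" using cc unfolding induced_def by blast+
    hence "{x,z1} = {x,z2}" using e1 e2 uniq_o[of "M3 i j" "Y i j" _ _ x] cc True by blast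
    thus ?thesis by (auto simp: doubleton_eq_iff)
  next
    case False
    hence "{x,z1} \<notin> M3 i j" "{x,z2} \<notin> M3 i j" unfolding induced_def by blast+
    moreover have "x \<in> W i j \<union> U i j" using False cc assms(3) by blast
    ultimately have "{x,z1} = {x,z2}" using e1 e2 uniq_b[of "M2 i j" "W i j" "U i j" _ _ x] cc by blast
    thus ?thesis by (auto simp: doubleton_eq_iff)
  qed
qed

lemma inM1: assumes "i \<in> {1..r}" "j \<in> {1,2,3}" "w \<in> W i j" "y \<in> V (i+1)" "{w,y} \<in> A"
  shows "{w,y} \<in> M1 i j"
  using assms subV[OF assms(1,2)] D1[OF assms(1,2)] unfolding induced_def by blast

lemma U2: assumes "i \<in> {1..r}" "j \<in> {1,2,3}" "y \<in> V (i+1)" "w1 \<in> W i j" "w2 \<in> W i j"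
  "{w1,y} \<in> A" "{w2,y} \<in> A" shows "w1 = w2"
proof -
  have "{w1,y} = {w2,y}" using uniq_b[of "M1 i j" "W i j" "V (i+1)" "{w1,y}" "{w2,y}" y]
      pmb1[OF assms(1,2)] inM1 assms by blast
  thus ?thesis by (auto simp: doubleton_eq_iff)
qed

lemma U3: assumes "i \<in> {1..r}" "j \<in> {1,2,3}" "w \<in> W i j" "y1 \<in> V (i+1)" "y2 \<in> V (i+1)"
  "{w,y1} \<in> A" "{w,y2} \<in> A" shows "y1 = y2"
proof -
  have "{w,y1} = {w,y2}" using uniq_b[of "M1 i j" "W i j" "V (i+1)" "{w,y1}" "{w,y2}" w]
      pmb1[OF assms(1,2)] inM1 assms by blast
  thus ?thesis by (auto simp: doubleton_eq_iff)
qed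

lemma U5: assumes "i \<in> {1..r}" "j \<in> {1,2,3}" "x \<in> W i j" "z \<in> W i j" "{x,z} \<in> A" shows False
proof -
  note cc = c4a[OF assms(1,2)] pmb1[OF assms(1,2)] pmb2[OF assms(1,2)] pmo3[OF assms(1,2)]
  have "{x,z} \<subseteq> Vs i j" using assms(3,4) subV[OF assms(1,2)] by blast
  hence "{x,z} \<in> M2 i j \<or> {x,z} \<in> M3 i j" using IN assms by blast
  thus False
  proof
    assume "{x,z} \<in> M2 i j"
    then obtain a b where "a \<in> W i j" "b \<in> U i j" "{x,z} = {a,b}" using pm2[OF assms(1,2)] by blast
    thus False using cc assms by (auto simp: doubleton_eq_iff)
  next
    assume "{x,z} \<in> M3 i j" thus False using cc assms unfolding induced_def by blast
  qed
qed

lemma pair_other: "x \<in> {a,b} \<Longrightarrow> a \<noteq> b \<Longrightarrow> \<exists>x'\<in>{a,b}. x' \<noteq> x \<and> {x,x'} = {a,b}"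
  by (metis insertE insert_commute insert_iff singletonD)

lemma exP: assumes "i \<in> {1..r}" "j \<in> {1,2,3}" "x \<in> Vs i j"
  shows "\<exists>x'\<in>Vs i j. x' \<noteq> x \<and> {x,x'} \<in> A"
proof -
  note cc = c4a[OF assms(1,2)]
  show ?thesis
  proof (cases "x \<in> Y i j")
    case True
    then obtain e where e: "e \<in> M3 i j" "x \<in> e" using pmo3[OF assms(1,2)] unfolding perfect_matching_of_def by blast
    then obtain a b where ab: "a \<in> Y i j" "b \<in> Y i j" "a \<noteq> b" "e = {a,b}" using pm3[OF assms(1,2)] by blast
    obtain x' where x': "x' \<in> {a,b}" "x' \<noteq> x" "{x,x'} = {a,b}" using pair_other[of x a b] ab e by blast
    have "e \<in> A" using e(1) unfolding induced_def by blast
    moreover have "x' \<in> Vs i j" using x'(1) ab cc by blast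
    ultimately show ?thesis using x' ab by auto
  next
    case False
    hence "x \<in> W i j \<union> U i j" using cc assms(3) by blast
    then obtain e where e: "e \<in> M2 i j" "x \<in> e" using pmb2[OF assms(1,2)] unfolding perfect_matching_between_def by blast
    then obtain a b where ab: "a \<in> W i j" "b \<in> U i j" "e = {a,b}" using pm2[OF assms(1,2)] by blast
    have "a \<noteq> b" using ab cc by blast
    then obtain x' where x': "x' \<in> {a,b}" "x' \<noteq> x" "{x,x'} = {a,b}" using pair_other[of x a b] ab e by blast
    have "e \<in> A" using e(1) unfolding induced_def by blast
    moreover have "x' \<in> Vs i j" using x'(1) ab cc by blast
    ultimately show ?thesis using x' ab by auto
  qed
qed

lemma exM: assumes "i \<in> {1..r}" "j \<in> {1,2,3}" "y \<in> V (i+1)"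
  shows "\<exists>w\<in>W i j. {w,y} \<in> A"
proof -
  obtain e where e: "e \<in> M1 i j" "y \<in> e" using pmb1[OF assms(1,2)] assms(3) unfolding perfect_matching_between_def by blast
  then obtain a b where ab: "a \<in> W i j" "b \<in> V (i+1)" "e = {a,b}" using pm1[OF assms(1,2)] by blast
  have "a \<notin> V (i+1)" using ab D1[OF assms(1,2)] subV[OF assms(1,2)] by blast
  hence "y = b" using ab e assms(3) by blast
  moreover have "e \<in> A" using e(1) unfolding induced_def by blast
  ultimately show ?thesis using ab by blast
qed

lemma exU: assumes "i \<in> {1..r}" "j \<in> {1,2,3}" "w \<in> W i j"
  shows "\<exists>u\<in>U i j. {w,u} \<in> A"
proof -
  obtain e where e: "e \<in> M2 i j" "w \<in> e" using pmb2[OF assms(1,2)] assms(3) unfolding perfect_matching_between_def by blast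
  then obtain a b where ab: "a \<in> W i j" "b \<in> U i j" "e = {a,b}" using pm2[OF assms(1,2)] by blast
  have "w \<notin> U i j" using c4a[OF assms(1,2)] assms(3) by blast
  hence "w = a" using ab e by blast
  moreover have "e \<in> A" using e(1) unfolding induced_def by blast
  ultimately show ?thesis using ab by blast
qed

end

context flw
begin

definition cyc where "cyc i a b c d \<longleftrightarrow> distinct [a,b,c,d] \<and> {a,b}\<in>A \<and> {b,c}\<in>A \<and> {c,d}\<in>A \<and> {d,a}\<in>A
   \<and> a\<in>V i \<and> b\<in>V i \<and> c\<in>V i \<and> d\<in>V i"

lemma cyc_rot: "cyc i a b c d \<Longrightarrow> cyc i b c d a"
  unfolding cyc_def by auto
lemma cyc_rev: "cyc i a b c d \<Longrightarrow> cyc i a d c b"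
  unfolding cyc_def by (auto simp: insert_commute)

lemma R4: assumes "i \<in> {1..r}" "distinct [a,b,c,d]" "a \<in> R i" "b \<in> R i" "c \<in> R i" "d \<in> R i"
  shows False
proof -
  have "{a,b,c,d} \<subseteq> {v i 1, v i 2, v i 3}" using assms c2[OF assms(1)] by blast
  hence "card {a,b,c,d} \<le> card {v i 1, v i 2, v i 3}" by (intro card_mono) auto
  also have "\<dots> \<le> 3" by (simp add: card_insert_if)
  finally show False using assms(2) by simp
qed

lemma noR_bR: assumes i: "i \<in> {1..r}" and j: "j \<in> {1,2,3}" and a: "a = v i j"
  and cy: "cyc i a b c d" and bR: "b \<in> R i" shows False
proof -
  note cy' = cy[unfolded cyc_def]
  obtain k where k: "k \<in> {1,2,3}" "b = v i k" using Rv[OF i bR] by blast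
  have kj: "k \<noteq> j" using k a cy' by auto
  have hc: "c \<in> R i \<or> c \<in> Vs i k"
    using NR[OF i k(1), of c] k cy' by blast
  have hd: "d \<in> R i \<or> d \<in> Vs i j"
    using NR[OF i j, of d] a cy' by (auto simp: insert_commute)
  from hd show False
  proof
    assume dR: "d \<in> R i"
    obtain l where l: "l \<in> {1,2,3}" "d = v i l" using Rv[OF i dR] by blast
    have lk: "l \<noteq> k" using k l cy' by auto
    show False
    proof (cases "c \<in> R i")
      case True
      then show False using R4[OF i, of a b c d] cy' bR dR vR[OF i j] a by blast
    next
      case False
      hence "c \<in> Vs i k" using hc by blast
      moreover have "c \<in> Vs i l" using NR[OF i l(1), of c] l cy' False by (auto simp: insert_commute)
      ultimately show False using D3[OF i k(1) l(1)] lk by blast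
    qed
  next
    assume dV: "d \<in> Vs i j"
    have "c = v i j \<or> c \<in> Vs i j \<or> (d \<in> W i j \<and> c \<in> V (i+1))"
      using E2[OF i j dV, of c] cy' by (auto simp: insert_commute)
    moreover have "c \<noteq> v i j" using a cy' by auto
    ultimately show False using hc D1[OF i j] D1[OF i k(1)] D3[OF i j k(1)] kj by blast
  qed
qed

lemma noR: assumes i: "i \<in> {1..r}" and j: "j \<in> {1,2,3}" and a: "a = v i j"
  and cy: "cyc i a b c d" shows False
proof -
  note cy' = cy[unfolded cyc_def]
  show False
  proof (cases "b \<in> R i \<or> d \<in> R i")
    case True
    thus False using noR_bR[OF i j a cy] noR_bR[OF i j a cyc_rev[OF cy]] by blast
  next
    case False
    hence b: "b \<in> Vs i j" and d: "d \<in> Vs i j"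
      using NR[OF i j, of b] NR[OF i j, of d] a cy' by (auto simp: insert_commute)
    have "c = v i j \<or> c \<in> Vs i j \<or> (b \<in> W i j \<and> c \<in> V (i+1))"
      using E2[OF i j b, of c] cy' by blast
    moreover have "c \<noteq> v i j" using a cy' by auto
    moreover have "c \<notin> Vs i j"
    proof
      assume "c \<in> Vs i j"
      hence "b = d" using U1[OF i j _ b d, of c] cy' by (auto simp: insert_commute)
      thus False using cy' by auto
    qed
    ultimately have cb: "b \<in> W i j" "c \<in> V (i+1)" by blast+
    have "c = v i j \<or> c \<in> Vs i j \<or> (d \<in> W i j \<and> c \<in> V (i+1))"
      using E2[OF i j d, of c] cy' by (auto simp: insert_commute)
    hence "d \<in> W i j" using cb D1[OF i j] vR[OF i j] by blast
    hence "b = d" using U2[OF i j cb(2) cb(1), of d] cy' by (auto simp: insert_commute)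
    thus False using cy' by auto
  qed
qed

lemma noVs1: assumes i: "i \<in> {1..r}" and j: "j \<in> {1,2,3}" and aW: "a \<in> W i j"
  and cy: "cyc i a b c d" and nR: "c \<notin> R i" and b: "b \<in> Vs i j" shows False
proof -
  note cy' = cy[unfolded cyc_def]
  have a: "a \<in> Vs i j" using aW subV[OF i j] by blast
  have "c = v i j \<or> c \<in> Vs i j \<or> (b \<in> W i j \<and> c \<in> V (i+1))"
    using E2[OF i j b, of c] cy' by blast
  moreover have "c \<noteq> v i j" using nR vR[OF i j] by blast
  moreover have "c \<notin> Vs i j"
  proof
    assume "c \<in> Vs i j"
    hence "a = c" using U1[OF i j b a, of c] cy' by (auto simp: insert_commute)
    thus False using cy' by auto
  qed
  ultimately have "b \<in> W i j" by blast
  thus False using U5[OF i j aW, of b] cy' by blast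
qed

lemma noVs: assumes i: "i \<in> {1..r}" and j: "j \<in> {1,2,3}" and a: "a \<in> Vs i j"
  and cy: "cyc i a b c d" and nR: "b \<notin> R i" "c \<notin> R i" "d \<notin> R i" shows False
proof -
  note cy' = cy[unfolded cyc_def]
  have hb: "b \<in> Vs i j \<or> (a \<in> W i j \<and> b \<in> V (i+1))"
    using E2[OF i j a, of b] cy' nR vR[OF i j] by blast
  have hd: "d \<in> Vs i j \<or> (a \<in> W i j \<and> d \<in> V (i+1))"
    using E2[OF i j a, of d] cy' nR vR[OF i j] by (auto simp: insert_commute)
  show False
  proof (cases "b \<in> Vs i j")
    case bV: True
    show False
    proof (cases "d \<in> Vs i j")
      case True
      hence "b = d" using U1[OF i j a bV True] cy' by (auto simp: insert_commute)
      thus False using cy' by auto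
    next
      case False
      hence "a \<in> W i j" using hd by blast
      thus False using noVs1[OF i j _ cy nR(2) bV] by blast
    qed
  next
    case bnV: False
    hence aW: "a \<in> W i j" and bV: "b \<in> V (i+1)" using hb by blast+
    show False
    proof (cases "d \<in> Vs i j")
      case True
      thus False using noVs1[OF i j aW cyc_rev[OF cy] nR(2) True] by blast
    next
      case False
      hence "d \<in> V (i+1)" using hd by blast
      hence "b = d" using U3[OF i j aW bV, of d] cy' by (auto simp: insert_commute)
      thus False using cy' by auto
    qed
  qed
qed

lemma C4_step: assumes i: "i \<in> {1..r}" and IH: "C4_free (induced A (V (i+1)))"
  shows "C4_free (induced A (V i))"
  unfolding C4_free_def
proof
  assume "\<exists>a b c d. distinct [a, b, c, d] \<and> {a, b} \<in> induced A (V i) \<and> {b, c} \<in> induced A (V i) \<and>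
     {c, d} \<in> induced A (V i) \<and> {d, a} \<in> induced A (V i)"
  then obtain a b c d where abcd: "distinct [a, b, c, d]" "{a, b} \<in> induced A (V i)" "{b, c} \<in> induced A (V i)"
     "{c, d} \<in> induced A (V i)" "{d, a} \<in> induced A (V i)" by blast
  have cy: "cyc i a b c d" using abcd unfolding cyc_def induced_def by auto
  have cys: "cyc i b c d a" "cyc i c d a b" "cyc i d a b c" using cyc_rot cy by blast+
  have noRx: "\<And>x y z w. cyc i x y z w \<Longrightarrow> x \<notin> R i"
  proof
    fix x y z w assume c: "cyc i x y z w" and "x \<in> R i"
    then obtain j where "j \<in> {1,2,3}" "x = v i j" using Rv[OF i] by blast
    thus False using noR[OF i _ _ c] by blast
  qed
  have nR: "a \<notin> R i" "b \<notin> R i" "c \<notin> R i" "d \<notin> R i"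
    using noRx[OF cy] noRx[OF cys(1)] noRx[OF cys(2)] noRx[OF cys(3)] by auto
  have nV: "a \<notin> Vs i j \<and> b \<notin> Vs i j \<and> c \<notin> Vs i j \<and> d \<notin> Vs i j" if j: "j \<in> {1,2,3}" for j
    using noVs[OF i j _ cy nR(2,3,4)] noVs[OF i j _ cys(1) nR(3,4,1)]
      noVs[OF i j _ cys(2) nR(4,1,2)] noVs[OF i j _ cys(3) nR(1,2,3)] by blast
  have inV: "a \<in> V i" "b \<in> V i" "c \<in> V i" "d \<in> V i" using cy unfolding cyc_def by blast+
  have VV: "V i = V (i+1) \<union> R i \<union> Vs i 1 \<union> Vs i 2 \<union> Vs i 3" using S2[OF i] .
  have all: "a \<in> V (i+1)" "b \<in> V (i+1)" "c \<in> V (i+1)" "d \<in> V (i+1)"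
    using inV VV nR nV[of 1] nV[of 2] nV[of 3] by blast+
  have "{a, b} \<in> induced A (V (i+1)) \<and> {b, c} \<in> induced A (V (i+1)) \<and>
     {c, d} \<in> induced A (V (i+1)) \<and> {d, a} \<in> induced A (V (i+1))"
    using abcd all unfolding induced_def by auto
  thus False using IH abcd(1) unfolding C4_free_def by blast
qed

lemma C4_all: assumes "1 \<le> k" "k \<le> r+1" shows "C4_free (induced A (V k))"
  using assms(2,1)
proof (induction k rule: inc_induct)
  case base
  then show ?case using c5 unfolding C4_saturated_def by blast
next
  case (step m)
  then show ?case using C4_step[of m] by simp
qed

lemma A_eq: "induced A (V 1) = A"
proof -
  have "\<forall>e\<in>A. e \<subseteq> {1..n}"
  proof
    fix e assume "e \<in> A"
    then obtain u w where "e = {u,w}" "u \<in> {1..n}" "w \<in> {1..n}" using edgeA by blast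
    thus "e \<subseteq> {1..n}" by blast
  qed
  thus ?thesis unfolding induced_def V1 by blast
qed

lemma C4_A: "C4_free A"
  using C4_all[of 1] A_eq by simp


lemma C4_mono: "\<not> C4_free X1 \<Longrightarrow> X1 \<subseteq> X2 \<Longrightarrow> \<not> C4_free X2"
  unfolding C4_free_def by blast

lemma path3: assumes "{a,x} \<in> A" "{x,y} \<in> A" "{y,b} \<in> A" "distinct [a,x,y,b]"
  shows "\<not> C4_free (insert {a,b} A)"
  unfolding C4_free_def
proof -
  have "{b,a} = {a,b}" by (rule insert_commute)
  thus "\<not> \<not> (\<exists>a' b' c d. distinct [a', b', c, d] \<and> {a', b'} \<in> insert {a,b} A \<and> {b', c} \<in> insert {a,b} A \<and>
     {c, d} \<in> insert {a,b} A \<and> {d, a'} \<in> insert {a,b} A)"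
    using assms by blast
qed

lemma tri: assumes i: "i \<in> {1..r}" "j \<in> {1,2,3}" "k \<in> {1,2,3}" "j \<noteq> k"
  shows "{v i j, v i k} \<in> A"
  using c2[OF i(1)] assms by (auto simp: insert_commute)

lemma sat_vs: assumes i: "i \<in> {1..r}" and j: "j \<in> {1,2,3}" and k: "k \<in> {1,2,3}" "k \<noteq> j"
  and b: "b \<in> Vs i k" shows "\<not> C4_free (insert {v i j, b} A)"
proof -
  obtain b' where b': "b' \<in> Vs i k" "b' \<noteq> b" "{b,b'} \<in> A" using exP[OF i k(1) b] by blast
  have e1: "{v i j, v i k} \<in> A" using tri[OF i j k(1)] k(2) by auto
  have e2: "{v i k, b'} \<in> A" using SA[OF i k(1) b'(1)] .
  have e3: "{b', b} \<in> A" using b'(3) by (simp add: insert_commute)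
  have "v i j \<noteq> v i k" using vinj[OF i j k(1)] k(2) by auto
  moreover have "v i j \<notin> Vs i k" "v i k \<notin> Vs i k" using D1[OF i k(1)] vR[OF i j] vR[OF i k(1)] by blast+
  ultimately have "distinct [v i j, v i k, b', b]" using b b' by auto
  thus ?thesis using path3[OF e1 e2 e3] by blast
qed

lemma sat_lvl: assumes i: "i \<in> {1..r}" and a: "a \<in> V i" "a \<notin> V (i+1)" and b: "b \<in> V i"
  and ab: "a \<noteq> b" "{a,b} \<notin> A"
  shows "\<not> C4_free (insert {a,b} A)"
proof -
  have aP: "a \<in> R i \<or> a \<in> Vs i 1 \<or> a \<in> Vs i 2 \<or> a \<in> Vs i 3" using a S2[OF i] by blast
  have bP: "b \<in> V (i+1) \<or> b \<in> R i \<or> b \<in> Vs i 1 \<or> b \<in> Vs i 2 \<or> b \<in> Vs i 3" using b S2[OF i] by blast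
  show ?thesis
  proof (cases "a \<in> R i")
    case True
    then obtain j where j: "j \<in> {1,2,3}" "a = v i j" using Rv[OF i] by blast
    show ?thesis
    proof (cases "b \<in> V (i+1)")
      case bV: True
      obtain w where w: "w \<in> W i j" "{w,b} \<in> A" using exM[OF i j(1) bV] by blast
      obtain u where u: "u \<in> U i j" "{w,u} \<in> A" using exU[OF i j(1) w(1)] by blast
      have uV: "u \<in> Vs i j" "w \<in> Vs i j" using u w subV[OF i j(1)] by blast+
      have e1: "{a,u} \<in> A" using SA[OF i j(1) uV(1)] j by simp
      have e2: "{u,w} \<in> A" using u(2) by (simp add: insert_commute)
      have "u \<noteq> w" using u w c4a[OF i j(1)] by blast
      moreover have "a \<notin> Vs i j" using True D1[OF i j(1)] by blast
      moreover have "u \<noteq> b" "w \<noteq> b" using uV bV D1[OF i j(1)] by blast+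
      ultimately have "distinct [a,u,w,b]" using uV ab by auto
      thus ?thesis using path3[OF e1 e2 w(2)] by blast
    next
      case bnV: False
      show ?thesis
      proof (cases "b \<in> R i")
        case True
        then obtain k where k: "k \<in> {1,2,3}" "b = v i k" using Rv[OF i] by blast
        hence "j \<noteq> k" using ab j by auto
        hence "{a,b} \<in> A" using tri[OF i j(1) k(1)] j k by simp
        thus ?thesis using ab by blast
      next
        case False
        then obtain k where k: "k \<in> {1,2,3}" "b \<in> Vs i k" using bP bnV by blast
        show ?thesis
        proof (cases "k = j")
          case True
          hence "{a,b} \<in> A" using SA[OF i j(1)] j k by simp
          thus ?thesis using ab by blast
        next
          case False
          thus ?thesis using sat_vs[OF i j(1) k(1) False k(2)] j by simp
        qed
      qed
    qed
  next
    case aNR: False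
    then obtain j where j: "j \<in> {1,2,3}" "a \<in> Vs i j" using aP by blast
    have av: "a \<noteq> v i j" using aNR vR[OF i j(1)] by blast
    show ?thesis
    proof (cases "b \<in> V (i+1)")
      case bV: True
      obtain w where w: "w \<in> W i j" "{w,b} \<in> A" using exM[OF i j(1) bV] by blast
      have e1: "{a, v i j} \<in> A" using SA[OF i j] by (simp add: insert_commute)
      have e2: "{v i j, w} \<in> A" using SA[OF i j(1)] w subV[OF i j(1)] by blast
      have "w \<noteq> a" using w ab by blast
      moreover have "v i j \<noteq> w" "v i j \<noteq> b" "w \<noteq> b"
        using vR[OF i j(1)] w subV[OF i j(1)] D1[OF i j(1)] bV by blast+
      ultimately have "distinct [a, v i j, w, b]" using av ab by auto
      thus ?thesis using path3[OF e1 e2 w(2)] by blast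
    next
      case bnV: False
      show ?thesis
      proof (cases "b \<in> R i")
        case True
        then obtain k where k: "k \<in> {1,2,3}" "b = v i k" using Rv[OF i] by blast
        show ?thesis
        proof (cases "k = j")
          case True
          hence "{a,b} \<in> A" using SA[OF i j] k by (simp add: insert_commute)
          thus ?thesis using ab by blast
        next
          case False
          have "\<not> C4_free (insert {v i k, a} A)" using sat_vs[OF i k(1) j(1) _ j(2)] False by auto
          thus ?thesis using k by (simp add: insert_commute)
        qed
      next
        case bNR: False
        then obtain k where k: "k \<in> {1,2,3}" "b \<in> Vs i k" using bP bnV by blast
        show ?thesis
        proof (cases "k = j")
          case True
          obtain a' where a': "a' \<in> Vs i j" "a' \<noteq> a" "{a,a'} \<in> A" using exP[OF i j] by blast
          have "a' \<noteq> b" using a' ab by blast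
          have e2: "{a', v i j} \<in> A" using SA[OF i j(1) a'(1)] by (simp add: insert_commute)
          have e3: "{v i j, b} \<in> A" using SA[OF i j(1)] k True by simp
          have "v i j \<noteq> b" "v i j \<noteq> a'" using bNR vR[OF i j(1)] a' D1[OF i j(1)] by blast+
          hence "distinct [a, a', v i j, b]" using \<open>a' \<noteq> b\<close> a' av ab by auto
          thus ?thesis using path3[OF a'(3) e2 e3] by blast
        next
          case False
          have e1: "{a, v i j} \<in> A" using SA[OF i j] by (simp add: insert_commute)
          have e2: "{v i j, v i k} \<in> A" using tri[OF i j(1) k(1)] False by auto
          have e3: "{v i k, b} \<in> A" using SA[OF i k] .
          have "v i j \<noteq> v i k" using vinj[OF i j(1) k(1)] False by auto
          moreover have "a \<noteq> v i k" "v i j \<noteq> b" "v i k \<noteq> b"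
            using aNR bNR vR[OF i j(1)] vR[OF i k(1)] by blast+
          ultimately have "distinct [a, v i j, v i k, b]" using av ab by auto
          thus ?thesis using path3[OF e1 e2 e3] by blast
        qed
      qed
    qed
  qed
qed

lemma find_level: assumes "e \<subseteq> V 1" "\<not> e \<subseteq> V (r+1)"
  shows "\<exists>i\<in>{1..r}. e \<subseteq> V i \<and> \<not> e \<subseteq> V (i+1)"
proof (rule ccontr)
  assume "\<not> ?thesis"
  hence H: "\<And>i. i \<in> {1..r} \<Longrightarrow> e \<subseteq> V i \<Longrightarrow> e \<subseteq> V (i+1)" by blast
  have "k \<le> r \<Longrightarrow> e \<subseteq> V (k+1)" for k
  proof (induction k)
    case 0 then show ?case using assms(1) by simp
  next
    case (Suc k)
    hence "e \<subseteq> V (k+1)" by simp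
    thus ?case using H[of "k+1"] Suc.prems by simp
  qed
  thus False using assms(2) by blast
qed

lemma SAT: "C4_saturated G A"
  unfolding C4_saturated_def
proof (intro conjI ballI)
  show "A \<subseteq> G" by (rule AG)
  show "C4_free A" by (rule C4_A)
  fix e assume e: "e \<in> G - A"
  then obtain a b where ab: "a \<noteq> b" "e = {a,b}" "a \<in> {1..n}" "b \<in> {1..n}"
    using gr unfolding graph_on_def by blast
  show "\<not> C4_free (insert e A)"
  proof (cases "e \<subseteq> V (r+1)")
    case True
    hence "e \<in> induced G (V (r+1)) - induced A (V (r+1))" using e unfolding induced_def by blast
    hence "\<not> C4_free (insert e (induced A (V (r+1))))" using c5 unfolding C4_saturated_def by blast
    moreover have "insert e (induced A (V (r+1))) \<subseteq> insert e A" unfolding induced_def by blast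
    ultimately show ?thesis by (rule C4_mono)
  next
    case False
    have "e \<subseteq> V 1" using ab V1 by simp
    then obtain i where i: "i \<in> {1..r}" "e \<subseteq> V i" "\<not> e \<subseteq> V (i+1)" using find_level False by blast
    show ?thesis
    proof (cases "a \<in> V (i+1)")
      case True
      hence "b \<notin> V (i+1)" using i ab by blast
      hence "\<not> C4_free (insert {b,a} A)" using sat_lvl[OF i(1), of b a] i ab e by (auto simp: insert_commute)
      thus ?thesis using ab by (simp add: insert_commute)
    next
      case False
      thus ?thesis using sat_lvl[OF i(1), of a b] i ab e by auto
    qed
  qed
qed

end

lemma pmb_sym: "perfect_matching_between M X Z \<Longrightarrow> perfect_matching_between M Z X"
  unfolding perfect_matching_between_def
proof (elim conjE, intro conjI)
  assume H1: "\<forall>e\<in>M. \<exists>x\<in>X. \<exists>z\<in>Z. e = {x, z}" and H2: "\<forall>x\<in>X \<union> Z. \<exists>!e. e \<in> M \<and> x \<in> e"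
  show "\<forall>e\<in>M. \<exists>x\<in>Z. \<exists>z\<in>X. e = {x, z}"
  proof
    fix e assume "e \<in> M"
    then obtain x z where "x \<in> X" "z \<in> Z" "e = {x,z}" using H1 by blast
    moreover have "{x,z} = {z,x}" by (rule insert_commute)
    ultimately show "\<exists>x\<in>Z. \<exists>z\<in>X. e = {x, z}" by blast
  qed
  have "Z \<union> X = X \<union> Z" by (rule Un_commute)
  thus "\<forall>x\<in>Z \<union> X. \<exists>!e. e \<in> M \<and> x \<in> e" using H2 by simp
qed

lemma card_pmb1: assumes fin: "finite M" and dis: "X \<inter> Z = {}" and pm: "perfect_matching_between M X Z"
  shows "card X = card M"
proof -
  define g where "g x = (THE e. e \<in> M \<and> x \<in> e)" for x
  have ex: "\<And>x. x \<in> X \<union> Z \<Longrightarrow> \<exists>!e. e \<in> M \<and> x \<in> e" using pm unfolding perfect_matching_between_def by blast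
  have gx: "\<And>x. x \<in> X \<Longrightarrow> g x \<in> M \<and> x \<in> g x"
    unfolding g_def using ex by (metis (no_types, lifting) UnI1 theI')
  have gu: "\<And>x e. x \<in> X \<Longrightarrow> e \<in> M \<Longrightarrow> x \<in> e \<Longrightarrow> g x = e"
    unfolding g_def using ex by (metis (no_types, lifting) UnI1 the1_equality)
  have form: "\<And>e. e \<in> M \<Longrightarrow> \<exists>x\<in>X. \<exists>z\<in>Z. e = {x, z}" using pm unfolding perfect_matching_between_def by blast
  have "bij_betw g X M"
    unfolding bij_betw_def
  proof (intro conjI)
    show "inj_on g X"
    proof (rule inj_onI)
      fix x1 x2 assume x: "x1 \<in> X" "x2 \<in> X" "g x1 = g x2"
      obtain a b where ab: "a \<in> X" "b \<in> Z" "g x1 = {a,b}" using form gx x(1) by blast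
      have "x1 \<in> {a,b}" "x2 \<in> {a,b}" using gx x ab by metis+
      thus "x1 = x2" using dis x ab by blast
    qed
    show "g ` X = M"
    proof
      show "g ` X \<subseteq> M" using gx by blast
      show "M \<subseteq> g ` X"
      proof
        fix e assume e: "e \<in> M"
        then obtain a b where ab: "a \<in> X" "b \<in> Z" "e = {a,b}" using form by blast
        hence "g a = e" using gu e by blast
        thus "e \<in> g ` X" using ab by blast
      qed
    qed
  qed
  thus ?thesis by (rule bij_betw_same_card)
qed

lemma card_pmb: assumes "finite M" "X \<inter> Z = {}" "perfect_matching_between M X Z"
  shows "card X = card M" "card Z = card M"
  using card_pmb1[OF assms] card_pmb1[OF assms(1) _ pmb_sym[OF assms(3)]] assms(2) by blast+

lemma ex1_same: "\<exists>!x. P x \<Longrightarrow> P a \<Longrightarrow> P b \<Longrightarrow> a = b" by blast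

lemma card_pmo: assumes fin: "finite Y" and pm: "perfect_matching_of M Y"
  shows "card Y = 2 * card M"
proof -
  have form: "\<And>e. e \<in> M \<Longrightarrow> \<exists>x\<in>Y. \<exists>z\<in>Y. x \<noteq> z \<and> e = {x, z}" using pm unfolding perfect_matching_of_def by blast
  have ex: "\<And>x. x \<in> Y \<Longrightarrow> \<exists>!e. e \<in> M \<and> x \<in> e" using pm unfolding perfect_matching_of_def by blast
  have MY: "\<And>e. e \<in> M \<Longrightarrow> e \<subseteq> Y"
  proof -
    fix e assume "e \<in> M"
    then obtain x z where "x \<in> Y" "z \<in> Y" "e = {x,z}" using form by blast
    thus "e \<subseteq> Y" by blast
  qed
  have U: "\<Union>M = Y"
  proof
    show "\<Union>M \<subseteq> Y" using MY by blast
    show "Y \<subseteq> \<Union>M"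
    proof
      fix x assume "x \<in> Y"
      then obtain e where "e \<in> M" "x \<in> e" using ex by blast
      thus "x \<in> \<Union>M" by blast
    qed
  qed
  have fe: "\<And>e. e \<in> M \<Longrightarrow> finite e"
  proof -
    fix e assume "e \<in> M"
    hence "e \<subseteq> Y" by (rule MY)
    thus "finite e" using fin by (rule finite_subset)
  qed
  have pw: "pairwise disjnt M"
    unfolding pairwise_def disjnt_def
  proof (intro ballI impI)
    fix e1 e2 assume e: "e1 \<in> M" "e2 \<in> M" "e1 \<noteq> e2"
    show "e1 \<inter> e2 = {}"
    proof (rule ccontr)
      assume "e1 \<inter> e2 \<noteq> {}"
      then obtain x where x: "x \<in> e1" "x \<in> e2" by blast
      have "x \<in> Y" using x(1) MY[OF e(1)] by blast
      hence "e1 = e2" using ex1_same[OF ex] e x by blast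
      thus False using e(3) by blast
    qed
  qed
  have "card (\<Union>M) = sum card M" by (rule card_Union_disjoint[OF pw fe])
  also have "\<dots> = sum (\<lambda>_. 2) M"
  proof (rule sum.cong)
    fix e assume "e \<in> M"
    then obtain x z where "x \<noteq> z" "e = {x,z}" using form by blast
    thus "card e = 2" by simp
  qed simp
  also have "\<dots> = 2 * card M" by simp
  finally show ?thesis using U by simp
qed

context flw
begin

abbreviation "T i \<equiv> {e \<in> A. e \<subseteq> R i}"
abbreviation "X i j \<equiv> S i j \<union> M1 i j \<union> M2 i j \<union> M3 i j"
abbreviation "L i \<equiv> induced A (V i) - induced A (V (i+1))"

lemma M_A: "M1 i j \<subseteq> A" "M2 i j \<subseteq> A" "M3 i j \<subseteq> A" unfolding induced_def by blast+

lemma Xprops: assumes i: "i \<in> {1..r}" and j: "j \<in> {1,2,3}" and e: "e \<in> X i j"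
  shows "e \<in> A" "e \<subseteq> R i \<union> Vs i j \<union> V (i+1)" "e \<inter> Vs i j \<noteq> {}"
proof -
  note s = subV[OF i j]
  have "e \<in> A \<and> e \<subseteq> R i \<union> Vs i j \<union> V (i+1) \<and> e \<inter> Vs i j \<noteq> {}"
  proof (cases "e \<in> S i j")
    case True
    then obtain x where x: "x \<in> Vs i j" "e = {v i j, x}" by blast
    have "e \<in> A" using SA[OF i j x(1)] x(2) by simp
    moreover have "v i j \<in> R i" by (rule vR[OF i j])
    ultimately show ?thesis using x by auto
  next
    case nS: False
    show ?thesis
    proof (cases "e \<in> M1 i j")
      case True
      then obtain w y where wy: "w \<in> W i j" "y \<in> V (i+1)" "e = {w,y}" using pm1[OF i j] by blast
      have "e \<in> A" using True M_A by blast
      moreover have "w \<in> Vs i j" using wy(1) s(4) by blast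
      ultimately show ?thesis using wy by auto
    next
      case nM1: False
      show ?thesis
      proof (cases "e \<in> M2 i j")
        case True
        then obtain w u where wu: "w \<in> W i j" "u \<in> U i j" "e = {w,u}" using pm2[OF i j] by blast
        have "e \<in> A" using True M_A by blast
        moreover have "w \<in> Vs i j" "u \<in> Vs i j" using wu s(4,5) by blast+
        ultimately show ?thesis using wu by auto
      next
        case False
        hence M3: "e \<in> M3 i j" using e nS nM1 by blast
        then obtain x z where xz: "x \<in> Y i j" "z \<in> Y i j" "e = {x,z}" using pm3[OF i j] by blast
        have "e \<in> A" using M3 M_A by blast
        moreover have "x \<in> Vs i j" "z \<in> Vs i j" using xz s(6) by blast+
        ultimately show ?thesis using xz by auto
      qed
    qed
  qed
  thus "e \<in> A" "e \<subseteq> R i \<union> Vs i j \<union> V (i+1)" "e \<inter> Vs i j \<noteq> {}" by blast+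
qed

lemma L_eq: assumes i: "i \<in> {1..r}" shows "L i = T i \<union> X i 1 \<union> X i 2 \<union> X i 3"
proof
  show "L i \<subseteq> T i \<union> X i 1 \<union> X i 2 \<union> X i 3"
  proof
    fix e assume "e \<in> L i"
    hence e: "e \<in> A" "e \<subseteq> V i" "\<not> e \<subseteq> V (i+1)" unfolding induced_def by blast+
    have "e \<subseteq> R i \<or> (\<exists>j\<in>{1,2,3}. e \<in> S i j \<or> e \<in> M1 i j \<or> e \<in> M2 i j \<or> e \<in> M3 i j)"
      using CL[OF i e] .
    thus "e \<in> T i \<union> X i 1 \<union> X i 2 \<union> X i 3" using e(1) by auto
  qed
  show "T i \<union> X i 1 \<union> X i 2 \<union> X i 3 \<subseteq> L i"
  proof
    fix e assume e: "e \<in> T i \<union> X i 1 \<union> X i 2 \<union> X i 3"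
    show "e \<in> L i"
    proof (cases "e \<in> T i")
      case True
      hence "e \<in> A" "e \<subseteq> R i" by blast+
      moreover have "e \<noteq> {}" using edge_nonempty calculation by blast
      ultimately show ?thesis using subV[OF i, of 1] D1[OF i, of 1] unfolding induced_def by blast
    next
      case False
      then obtain j where j: "j \<in> {1,2,3}" "e \<in> X i j" using e by blast
      note xp = Xprops[OF i j]
      show ?thesis using xp subV[OF i j(1)] D1[OF i j(1)] unfolding induced_def by blast
    qed
  qed
qed

lemma card_T: assumes i: "i \<in> {1..r}" shows "card (T i) = 3"
proof -
  have "T i = {{v i 1, v i 2}, {v i 2, v i 3}, {v i 1, v i 3}}"
  proof
    show "T i \<subseteq> {{v i 1, v i 2}, {v i 2, v i 3}, {v i 1, v i 3}}"
    proof
      fix e assume e: "e \<in> T i"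
      then obtain u w where uw: "u \<noteq> w" "e = {u,w}" using edgeA by blast
      have "u \<in> R i" "w \<in> R i" using e uw by blast+
      thus "e \<in> {{v i 1, v i 2}, {v i 2, v i 3}, {v i 1, v i 3}}" using c2[OF i] uw
        by (auto simp: insert_commute)
    qed
    show "{{v i 1, v i 2}, {v i 2, v i 3}, {v i 1, v i 3}} \<subseteq> T i" using c2[OF i] by auto
  qed
  moreover have "card {{v i 1, v i 2}, {v i 2, v i 3}, {v i 1, v i 3}} = 3"
    using vdist[OF i] by (auto simp: doubleton_eq_iff)
  ultimately show ?thesis by simp
qed

lemma card_S: assumes i: "i \<in> {1..r}" and j: "j \<in> {1,2,3}" shows "card (S i j) = card (Vs i j)"
proof (rule card_image)
  have "v i j \<notin> Vs i j" using vR[OF i j] D1[OF i j] by blast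
  thus "inj_on (\<lambda>x. {v i j, x}) (Vs i j)" unfolding inj_on_def by (auto simp: doubleton_eq_iff)
qed

lemma finVs: assumes i: "i \<in> {1..r}" and j: "j \<in> {1,2,3}" shows "finite (Vs i j)" "finite (W i j)" "finite (U i j)" "finite (Y i j)"
proof -
  have "finite (V i)" using finV i by auto
  thus "finite (Vs i j)" "finite (W i j)" "finite (U i j)" "finite (Y i j)" using subV[OF i j] finite_subset by metis+
qed

lemma card_X: assumes i: "i \<in> {1..r}" and j: "j \<in> {1,2,3}"
  shows "2 * card (X i j) = 3 * card (Vs i j) + 2 * card (V (i+1))"
proof -
  note s = subV[OF i j] and d = D1[OF i j] and cc = c4a[OF i j]
  have fS: "finite (S i j)" using finVs[OF i j] by blast
  have fM: "finite (M1 i j)" "finite (M2 i j)" "finite (M3 i j)"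
    using finA M_A finite_subset by metis+
  have vn: "v i j \<notin> Vs i j" "v i j \<notin> V (i+1)" using vR[OF i j] d by blast+
  have WUV: "(W i j \<union> U i j) \<inter> V (i+1) = {}" "Y i j \<inter> V (i+1) = {}" "(W i j \<union> U i j) \<inter> Y i j = {}"
    "W i j \<union> U i j \<subseteq> Vs i j" "Y i j \<subseteq> Vs i j" "W i j \<subseteq> Vs i j"
    using s d cc by blast+
  have hS: "\<And>e. e \<in> S i j \<Longrightarrow> v i j \<in> e" by blast
  have hM1: "\<And>e. e \<in> M1 i j \<Longrightarrow> e \<inter> V (i+1) \<noteq> {} \<and> e \<subseteq> Vs i j \<union> V (i+1)"
  proof -
    fix e assume "e \<in> M1 i j"
    then obtain w y where "w \<in> W i j" "y \<in> V (i+1)" "e = {w,y}" using pm1[OF i j] by blast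
    thus "e \<inter> V (i+1) \<noteq> {} \<and> e \<subseteq> Vs i j \<union> V (i+1)" using WUV(6) by blast
  qed
  have hM2: "\<And>e. e \<in> M2 i j \<Longrightarrow> e \<subseteq> W i j \<union> U i j \<and> e \<noteq> {}"
  proof -
    fix e assume "e \<in> M2 i j"
    then obtain w y where "w \<in> W i j" "y \<in> U i j" "e = {w,y}" using pm2[OF i j] by blast
    thus "e \<subseteq> W i j \<union> U i j \<and> e \<noteq> {}" by blast
  qed
  have hM3: "\<And>e. e \<in> M3 i j \<Longrightarrow> e \<subseteq> Y i j \<and> e \<noteq> {}"
  proof -
    fix e assume "e \<in> M3 i j"
    then obtain w y where "w \<in> Y i j" "y \<in> Y i j" "e = {w,y}" using pm3[OF i j] by blast
    thus "e \<subseteq> Y i j \<and> e \<noteq> {}" by blast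
  qed
  have d1: "S i j \<inter> M1 i j = {}"
  proof (rule ccontr)
    assume "S i j \<inter> M1 i j \<noteq> {}"
    then obtain e where "e \<in> S i j" "e \<in> M1 i j" by blast
    thus False using hS hM1 vn by blast
  qed
  have d2: "(S i j \<union> M1 i j) \<inter> M2 i j = {}"
  proof (rule ccontr)
    assume "(S i j \<union> M1 i j) \<inter> M2 i j \<noteq> {}"
    then obtain e where "e \<in> S i j \<or> e \<in> M1 i j" "e \<in> M2 i j" by blast
    thus False using hS[of e] hM1[of e] hM2[of e] vn WUV by blast
  qed
  have d3: "(S i j \<union> M1 i j \<union> M2 i j) \<inter> M3 i j = {}"
  proof (rule ccontr)
    assume "(S i j \<union> M1 i j \<union> M2 i j) \<inter> M3 i j \<noteq> {}"
    then obtain e where "e \<in> S i j \<or> e \<in> M1 i j \<or> e \<in> M2 i j" "e \<in> M3 i j" by blast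
    thus False using hS[of e] hM1[of e] hM2[of e] hM3[of e] vn WUV by blast
  qed
  have c1: "card (S i j \<union> M1 i j) = card (S i j) + card (M1 i j)"
    by (rule card_Un_disjoint[OF fS fM(1) d1])
  have c2: "card (S i j \<union> M1 i j \<union> M2 i j) = card (S i j \<union> M1 i j) + card (M2 i j)"
    by (rule card_Un_disjoint[OF _ fM(2) d2]) (use fS fM in simp)
  have c3: "card (X i j) = card (S i j \<union> M1 i j \<union> M2 i j) + card (M3 i j)"
    by (rule card_Un_disjoint[OF _ fM(3) d3]) (use fS fM in simp)
  have e1: "card (S i j) = card (Vs i j)" using card_S[OF i j] .
  have dWV: "W i j \<inter> V (i+1) = {}" using WUV(1) by blast
  have e2: "card (V (i+1)) = card (M1 i j)"
    using card_pmb(2)[OF fM(1) dWV pmb1[OF i j]] .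
  have dWU: "W i j \<inter> U i j = {}" using cc by blast
  have e3: "card (W i j) = card (M2 i j)" "card (U i j) = card (M2 i j)"
    using card_pmb[OF fM(2) dWU pmb2[OF i j]] by blast+
  have e4: "card (Y i j) = 2 * card (M3 i j)" using card_pmo[OF finVs(4)[OF i j] pmo3[OF i j]] .
  have e5: "card (Vs i j) = card (W i j) + card (U i j) + card (Y i j)"
  proof -
    have f: "finite (W i j)" "finite (U i j)" "finite (Y i j)" using finVs[OF i j] by blast+
    have "card (W i j \<union> U i j) = card (W i j) + card (U i j)" by (rule card_Un_disjoint[OF f(1,2) dWU])
    moreover have "card (W i j \<union> U i j \<union> Y i j) = card (W i j \<union> U i j) + card (Y i j)"
      by (rule card_Un_disjoint[OF _ f(3) WUV(3)]) (use f in simp)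
    moreover have "Vs i j = W i j \<union> U i j \<union> Y i j" using cc by blast
    ultimately show ?thesis by simp
  qed
  show ?thesis using c1 c2 c3 e1 e2 e3 e4 e5 by linarith
qed

definition TT where "TT i = {e \<in> A. e \<subseteq> R i}"
definition XX where "XX i j = S i j \<union> M1 i j \<union> M2 i j \<union> M3 i j"

lemma card_L: assumes i: "i \<in> {1..r}"
  shows "2 * card (L i) + 3 = 3 * card (V i) + 3 * card (V (i+1))"
proof -
  have fT: "finite (TT i)" unfolding TT_def using finA by simp
  have fX: "finite (XX i j)" if j: "j \<in> {1,2,3}" for j
  proof -
    have "finite (S i j)" using finVs[OF i j] by blast
    moreover have "finite (M1 i j)" "finite (M2 i j)" "finite (M3 i j)"
      using finA M_A finite_subset by metis+
    ultimately show ?thesis unfolding XX_def by simp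
  qed
  have XA: "e \<inter> Vs i j \<noteq> {} \<and> e \<subseteq> R i \<union> Vs i j \<union> V (i+1)" if "j \<in> {1,2,3}" "e \<in> XX i j" for j e
    using Xprops(3)[OF i that(1) that(2)[unfolded XX_def]] Xprops(2)[OF i that(1) that(2)[unfolded XX_def]] by (rule conjI)
  have TX: "e \<inter> Vs i j = {}" if "j \<in> {1,2,3}" "e \<in> TT i" for j e
  proof -
    have "e \<subseteq> R i" using that(2) unfolding TT_def by blast
    thus ?thesis using D1(3)[OF i that(1)] by blast
  qed
  have XXd: "\<And>j k e. j \<in> {1,2,3} \<Longrightarrow> k \<in> {1,2,3} \<Longrightarrow> j \<noteq> k \<Longrightarrow> e \<in> XX i j \<Longrightarrow> e \<notin> XX i k"
  proof
    fix j k e assume jk: "j \<in> {1,2,3}" "k \<in> {1,2,3}" "j \<noteq> k" "e \<in> XX i j" "e \<in> XX i k"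
    have "e \<inter> Vs i j \<noteq> {}" using XA jk by blast
    moreover have "e \<subseteq> R i \<union> Vs i k \<union> V (i+1)" using XA jk by blast
    moreover have "Vs i j \<inter> R i = {}" "Vs i j \<inter> V (i+1) = {}" using D1[OF i jk(1)] by blast+
    moreover have "Vs i j \<inter> Vs i k = {}" using D3[OF i jk(1,2,3)] .
    ultimately show False by blast
  qed
  have d1: "TT i \<inter> XX i 1 = {}"
  proof (rule ccontr)
    assume "TT i \<inter> XX i 1 \<noteq> {}"
    then obtain e where "e \<in> TT i" "e \<in> XX i 1" by blast
    thus False using TX[of 1 e] XA[of 1 e] by auto
  qed
  have d2: "(TT i \<union> XX i 1) \<inter> XX i 2 = {}"
  proof (rule ccontr)
    assume "(TT i \<union> XX i 1) \<inter> XX i 2 \<noteq> {}"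
    then obtain e where "e \<in> TT i \<or> e \<in> XX i 1" "e \<in> XX i 2" by blast
    thus False using TX[of 2 e] XA[of 2 e] XXd[of 1 2 e] by auto
  qed
  have d3: "(TT i \<union> XX i 1 \<union> XX i 2) \<inter> XX i 3 = {}"
  proof (rule ccontr)
    assume "(TT i \<union> XX i 1 \<union> XX i 2) \<inter> XX i 3 \<noteq> {}"
    then obtain e where "e \<in> TT i \<or> e \<in> XX i 1 \<or> e \<in> XX i 2" "e \<in> XX i 3" by blast
    thus False using TX[of 3 e] XA[of 3 e] XXd[of 1 3 e] XXd[of 2 3 e] by auto
  qed
  have f1: "finite (XX i 1)" "finite (XX i 2)" "finite (XX i 3)" using fX by auto
  have k1: "card (TT i \<union> XX i 1) = card (TT i) + card (XX i 1)" by (rule card_Un_disjoint[OF fT f1(1) d1])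
  have k2: "card (TT i \<union> XX i 1 \<union> XX i 2) = card (TT i \<union> XX i 1) + card (XX i 2)"
    by (rule card_Un_disjoint[OF _ f1(2) d2]) (use fT f1 in simp)
  have k3: "card (TT i \<union> XX i 1 \<union> XX i 2 \<union> XX i 3) = card (TT i \<union> XX i 1 \<union> XX i 2) + card (XX i 3)"
    by (rule card_Un_disjoint[OF _ f1(3) d3]) (use fT f1 in simp)
  have cLi: "card (L i) = card (TT i) + card (XX i 1) + card (XX i 2) + card (XX i 3)"
  proof -
    have "L i = TT i \<union> XX i 1 \<union> XX i 2 \<union> XX i 3" unfolding TT_def XX_def by (rule L_eq[OF i])
    thus ?thesis using k1 k2 k3 by simp
  qed
  have cV: "card (V i) = card (V (i+1)) + 3 + card (Vs i 1) + card (Vs i 2) + card (Vs i 3)"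
  proof -
    have fVi: "finite (V i)" using finV[of i] i by simp
    have f: "finite (V (i+1))" "finite (R i)" "finite (Vs i 1)" "finite (Vs i 2)" "finite (Vs i 3)"
    proof -
      show "finite (V (i+1))" using finV[of "i+1"] i by simp
      show "finite (R i)" using finite_subset[OF subV(1)[OF i, of 1] fVi] by simp
      show "finite (Vs i 1)" "finite (Vs i 2)" "finite (Vs i 3)" using finVs(1)[OF i] by simp_all
    qed
    have cR: "card (R i) = 3" using c2[OF i] vdist[OF i] by simp
    have g1: "V (i+1) \<inter> R i = {}" using D1[OF i, of 1] by blast
    have g2: "(V (i+1) \<union> R i) \<inter> Vs i 1 = {}" using D1[OF i, of 1] by blast
    have g3: "(V (i+1) \<union> R i \<union> Vs i 1) \<inter> Vs i 2 = {}" using D1[OF i, of 2] D3[OF i, of 1 2] by auto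
    have g4: "(V (i+1) \<union> R i \<union> Vs i 1 \<union> Vs i 2) \<inter> Vs i 3 = {}" using D1[OF i, of 3] D3[OF i, of 1 3] D3[OF i, of 2 3] by auto
    have h1: "card (V (i+1) \<union> R i) = card (V (i+1)) + card (R i)" by (rule card_Un_disjoint[OF f(1,2) g1])
    have h2: "card (V (i+1) \<union> R i \<union> Vs i 1) = card (V (i+1) \<union> R i) + card (Vs i 1)"
      by (rule card_Un_disjoint[OF _ f(3) g2]) (use f in simp)
    have h3: "card (V (i+1) \<union> R i \<union> Vs i 1 \<union> Vs i 2) = card (V (i+1) \<union> R i \<union> Vs i 1) + card (Vs i 2)"
      by (rule card_Un_disjoint[OF _ f(4) g3]) (use f in simp)
    have h4: "card (V (i+1) \<union> R i \<union> Vs i 1 \<union> Vs i 2 \<union> Vs i 3) = card (V (i+1) \<union> R i \<union> Vs i 1 \<union> Vs i 2) + card (Vs i 3)"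
      by (rule card_Un_disjoint[OF _ f(5) g4]) (use f in simp)
    show ?thesis using S2[OF i] h1 h2 h3 h4 cR by simp
  qed
  have cT: "card (TT i) = 3" unfolding TT_def by (rule card_T[OF i])
  have x1: "2 * card (XX i 1) = 3 * card (Vs i 1) + 2 * card (V (i+1))" unfolding XX_def by (rule card_X[OF i]) simp
  have x2: "2 * card (XX i 2) = 3 * card (Vs i 2) + 2 * card (V (i+1))" unfolding XX_def by (rule card_X[OF i]) simp
  have x3: "2 * card (XX i 3) = 3 * card (Vs i 3) + 2 * card (V (i+1))" unfolding XX_def by (rule card_X[OF i]) simp
  show ?thesis using cLi cV cT x1 x2 x3 by linarith
qed

lemma card_step: assumes i: "i \<in> {1..r}"
  shows "card (induced A (V i)) = card (induced A (V (i+1))) + card (L i)"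
proof -
  have sub: "induced A (V (i+1)) \<subseteq> induced A (V i)" using subV[OF i, of 1] unfolding induced_def by blast
  have "finite (induced A (V i))" using finA unfolding induced_def by auto
  thus ?thesis using card_Diff_subset[OF finite_subset[OF sub] sub] card_mono[OF _ sub] by simp
qed

lemma count_k: assumes "1 \<le> k" "k \<le> r+1"
  shows "real (card (induced A (V k))) = real (card (induced A (V (r+1))))
      + 3/2 * (real (card (V k)) - real (card (V (r+1))) - (real (r+1) - real k))
      + 3 * (\<Sum>i=k+1..r+1. real (card (V i)))"
  using assms(2,1)
proof (induction k rule: inc_induct)
  case base
  then show ?case by simp
next
  case (step m)
  have i: "m \<in> {1..r}" using step by auto
  have IH: "real (card (induced A (V (m+1)))) = real (card (induced A (V (r+1))))
      + 3/2 * (real (card (V (m+1))) - real (card (V (r+1))) - (real (r+1) - real (m+1)))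
      + 3 * (\<Sum>i=m+1+1..r+1. real (card (V i)))"
    using step(3) by (simp only: Suc_eq_plus1)
  have a: "real (card (induced A (V m))) = real (card (induced A (V (m+1)))) + real (card (L m))"
    using card_step[OF i] by simp
  have b: "2 * real (card (L m)) + 3 = 3 * real (card (V m)) + 3 * real (card (V (m+1)))"
    using card_L[OF i] by (metis (mono_tags, lifting) of_nat_add of_nat_mult of_nat_numeral)
  have mm: "m+1 \<le> r+1" using step(2) by simp
  have c: "(\<Sum>i=m+1..r+1. real (card (V i))) = real (card (V (m+1))) + (\<Sum>i=m+1+1..r+1. real (card (V i)))"
    using sum.atLeast_Suc_atMost[OF mm, of "\<lambda>i. real (card (V i))"] by (simp only: Suc_eq_plus1)
  have rm: "real (m+1) = real m + 1" by simp
  show ?case using IH a b c rm by (simp only: right_diff_distrib distrib_left)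
qed

lemma count: "real (card A) = real (card (induced A (V (r+1))))
      + 3/2 * (real n - real (card (V (r+1))) - real r)
      + 3 * (\<Sum>i=2..r+1. real (card (V i)))"
proof -
  have h: "real (card (induced A (V 1))) = real (card (induced A (V (r+1))))
      + 3/2 * (real (card (V 1)) - real (card (V (r+1))) - (real (r+1) - real (1::nat)))
      + 3 * (\<Sum>i=1+1..r+1. real (card (V i)))" by (rule count_k) simp_all
  moreover have "card (V 1) = n" using V1 by simp
  moreover have "real (r+1) - real (1::nat) = real r" by simp
  moreover have "(1::nat)+1 = 2" by simp
  ultimately show ?thesis using A_eq by (simp only:)
qed

end

theorem lemma6:
  fixes n r :: nat and G A :: "nat set set"
    and V R :: "nat \<Rightarrow> nat set" and v :: "nat \<Rightarrow> nat \<Rightarrow> nat"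
    and Vs W U Y :: "nat \<Rightarrow> nat \<Rightarrow> nat set"
  assumes "graph_on n G"
    and "A \<subseteq> G"
    and "is_flower n G A r V R v Vs W U Y"
  shows "C4_saturated G A \<and>
    real (card A) = real (card (induced A (V (r+1))))
      + 3/2 * (real n - real (card (V (r+1))) - real r)
      + 3 * (\<Sum>i=2..r+1. real (card (V i)))"
proof -
  interpret flw n G A V R v Vs W U Y r
    by (rule flw.intro) (rule assms)+
  show ?thesis using SAT count by blast
qed

end
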